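(* Let $v,\Delta$ be nonnegative integers with $v+\Delta\le4$. Then for every $0<\lambda\le1$, $\varPhi_{v,\Delta}(\lambda)\le(1+4\lambda+6\lambda^2)^{v/4}$.
   Context: For nonnegative integers $v,\Delta$ and $0<\lambda\le 1$, the local factor is \[ \varPhi_{v,\Delta}(\lambda)=\frac{\sum_{t=0}^v\binom vt\lambda^{\min\{t,\,\Delta+v-t\}}}{1+\lambda^{\Delta}}. \] *)

theory Defs
  imports Complex_Main
begin

definition Phi :: "nat \<Rightarrow> nat \<Rightarrow> real \<Rightarrow> real" where
  "Phi v D lam = (\<Sum>t = 0..v. real (v choose t) * lam ^ min t (D + v - t)) / (1 + lam ^ D)"

end

theory Submission
  imports Defs
begin

lemma key:
  fixes N d q :: real and v :: nat
  assumes "0 \<le> N" "0 < d" "1 \<le> q" "N^4 \<le> q^v * d^4"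
  shows "N / d \<le> q powr (real v / 4)"
proof -
  have qp: "(q powr (real v / 4))^4 = q^v"
  proof -
    have "(q powr (real v / 4))^4 = q powr (real v / 4 * 4)"
      using assms(3) by (simp add: powr_realpow[symmetric] powr_powr)
    also have "\<dots> = q powr (real v)" by simp
    also have "\<dots> = q^v" using assms(3) by (simp add: powr_realpow)
    finally show ?thesis .
  qed
  have "(N/d)^4 = N^4 / d^4" by (simp add: power_divide)
  also have "\<dots> \<le> q^v" using assms(2,4) by (simp add: divide_le_eq)
  finally have "(N/d)^Suc 3 \<le> (q powr (real v / 4))^Suc 3" using qp by simp
  then show ?thesis by (rule power_le_imp_le_base) simp
qed

lemma phi_0_0: "Phi 0 0 l = (1) / (1 + l^0)"
  by (simp add: Phi_def numeral_eq_Suc binomial_Suc_Suc algebra_simps)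

lemma ineq_0_0: assumes "0 \<le> (l::real)" shows "(1)^4 \<le> (1 + 4*l + 6*l^2)^0 * (1 + l^0)^4"
proof -
  have e: "(1 + 4*l + 6*l^2)^0 * (1 + l^0)^4 - (1)^4 = (15)" by (simp add: algebra_simps eval_nat_numeral)
  have "(15) \<ge> (0::real)" using assms by ((intro add_nonneg_nonneg mult_nonneg_nonneg zero_le_power)?; simp)
  with e show ?thesis by linarith
qed

lemma phi_0_1: "Phi 0 1 l = (1) / (1 + l^1)"
  by (simp add: Phi_def numeral_eq_Suc binomial_Suc_Suc algebra_simps)

lemma ineq_0_1: assumes "0 \<le> (l::real)" shows "(1)^4 \<le> (1 + 4*l + 6*l^2)^0 * (1 + l^1)^4"
proof -
  have e: "(1 + 4*l + 6*l^2)^0 * (1 + l^1)^4 - (1)^4 = (4*l + 6*l^2 + 4*l^3 + l^4)" by (simp add: algebra_simps eval_nat_numeral)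
  have "(4*l + 6*l^2 + 4*l^3 + l^4) \<ge> (0::real)" using assms by ((intro add_nonneg_nonneg mult_nonneg_nonneg zero_le_power)?; simp)
  with e show ?thesis by linarith
qed

lemma phi_0_2: "Phi 0 2 l = (1) / (1 + l^2)"
  by (simp add: Phi_def numeral_eq_Suc binomial_Suc_Suc algebra_simps)

lemma ineq_0_2: assumes "0 \<le> (l::real)" shows "(1)^4 \<le> (1 + 4*l + 6*l^2)^0 * (1 + l^2)^4"
proof -
  have e: "(1 + 4*l + 6*l^2)^0 * (1 + l^2)^4 - (1)^4 = (4*l^2 + 6*l^4 + 4*l^6 + l^8)" by (simp add: algebra_simps eval_nat_numeral)
  have "(4*l^2 + 6*l^4 + 4*l^6 + l^8) \<ge> (0::real)" using assms by ((intro add_nonneg_nonneg mult_nonneg_nonneg zero_le_power)?; simp)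
  with e show ?thesis by linarith
qed

lemma phi_0_3: "Phi 0 3 l = (1) / (1 + l^3)"
  by (simp add: Phi_def numeral_eq_Suc binomial_Suc_Suc algebra_simps)

lemma ineq_0_3: assumes "0 \<le> (l::real)" shows "(1)^4 \<le> (1 + 4*l + 6*l^2)^0 * (1 + l^3)^4"
proof -
  have e: "(1 + 4*l + 6*l^2)^0 * (1 + l^3)^4 - (1)^4 = (4*l^3 + 6*l^6 + 4*l^9 + l^12)" by (simp add: algebra_simps eval_nat_numeral)
  have "(4*l^3 + 6*l^6 + 4*l^9 + l^12) \<ge> (0::real)" using assms by ((intro add_nonneg_nonneg mult_nonneg_nonneg zero_le_power)?; simp)
  with e show ?thesis by linarith
qed

lemma phi_0_4: "Phi 0 4 l = (1) / (1 + l^4)"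
  by (simp add: Phi_def numeral_eq_Suc binomial_Suc_Suc algebra_simps)

lemma ineq_0_4: assumes "0 \<le> (l::real)" shows "(1)^4 \<le> (1 + 4*l + 6*l^2)^0 * (1 + l^4)^4"
proof -
  have e: "(1 + 4*l + 6*l^2)^0 * (1 + l^4)^4 - (1)^4 = (4*l^4 + 6*l^8 + 4*l^12 + l^16)" by (simp add: algebra_simps eval_nat_numeral)
  have "(4*l^4 + 6*l^8 + 4*l^12 + l^16) \<ge> (0::real)" using assms by ((intro add_nonneg_nonneg mult_nonneg_nonneg zero_le_power)?; simp)
  with e show ?thesis by linarith
qed

lemma phi_1_0: "Phi 1 0 l = (2) / (1 + l^0)"
  by (simp add: Phi_def numeral_eq_Suc binomial_Suc_Suc algebra_simps)

lemma ineq_1_0: assumes "0 \<le> (l::real)" shows "(2)^4 \<le> (1 + 4*l + 6*l^2)^1 * (1 + l^0)^4"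
proof -
  have e: "(1 + 4*l + 6*l^2)^1 * (1 + l^0)^4 - (2)^4 = (64*l + 96*l^2)" by (simp add: algebra_simps eval_nat_numeral)
  have "(64*l + 96*l^2) \<ge> (0::real)" using assms by ((intro add_nonneg_nonneg mult_nonneg_nonneg zero_le_power)?; simp)
  with e show ?thesis by linarith
qed

lemma phi_1_1: "Phi 1 1 l = (1 + l) / (1 + l^1)"
  by (simp add: Phi_def numeral_eq_Suc binomial_Suc_Suc algebra_simps)

lemma ineq_1_1: assumes "0 \<le> (l::real)" shows "(1 + l)^4 \<le> (1 + 4*l + 6*l^2)^1 * (1 + l^1)^4"
proof -
  have e: "(1 + 4*l + 6*l^2)^1 * (1 + l^1)^4 - (1 + l)^4 = (4*l + 22*l^2 + 48*l^3 + 52*l^4 + 28*l^5 + 6*l^6)" by (simp add: algebra_simps eval_nat_numeral)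
  have "(4*l + 22*l^2 + 48*l^3 + 52*l^4 + 28*l^5 + 6*l^6) \<ge> (0::real)" using assms by ((intro add_nonneg_nonneg mult_nonneg_nonneg zero_le_power)?; simp)
  with e show ?thesis by linarith
qed

lemma phi_1_2: "Phi 1 2 l = (1 + l) / (1 + l^2)"
  by (simp add: Phi_def numeral_eq_Suc binomial_Suc_Suc algebra_simps)

lemma ineq_1_2: assumes "0 \<le> (l::real)" shows "(1 + l)^4 \<le> (1 + 4*l + 6*l^2)^1 * (1 + l^2)^4"
proof -
  have e: "(1 + 4*l + 6*l^2)^1 * (1 + l^2)^4 - (1 + l)^4 = (4*l^2 + 12*l^3 + 29*l^4 + 24*l^5 + 40*l^6 + 16*l^7 + 25*l^8 + 4*l^9 + 6*l^10)" by (simp add: algebra_simps eval_nat_numeral)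
  have "(4*l^2 + 12*l^3 + 29*l^4 + 24*l^5 + 40*l^6 + 16*l^7 + 25*l^8 + 4*l^9 + 6*l^10) \<ge> (0::real)" using assms by ((intro add_nonneg_nonneg mult_nonneg_nonneg zero_le_power)?; simp)
  with e show ?thesis by linarith
qed

lemma phi_1_3: "Phi 1 3 l = (1 + l) / (1 + l^3)"
  by (simp add: Phi_def numeral_eq_Suc binomial_Suc_Suc algebra_simps)

lemma ineq_1_3: assumes "0 \<le> (l::real)" shows "(1 + l)^4 \<le> (1 + 4*l + 6*l^2)^1 * (1 + l^3)^4"
proof -
  have e: "(1 + 4*l + 6*l^2)^1 * (1 + l^3)^4 - (1 + l)^4 = (15*l^4 + 24*l^5 + 6*l^6 + 24*l^7 + 36*l^8 + 4*l^9 + 16*l^10 + 24*l^11 + l^12 + 4*l^13 + 6*l^14)" by (simp add: algebra_simps eval_nat_numeral)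
  have "(15*l^4 + 24*l^5 + 6*l^6 + 24*l^7 + 36*l^8 + 4*l^9 + 16*l^10 + 24*l^11 + l^12 + 4*l^13 + 6*l^14) \<ge> (0::real)" using assms by ((intro add_nonneg_nonneg mult_nonneg_nonneg zero_le_power)?; simp)
  with e show ?thesis by linarith
qed

lemma phi_2_0: "Phi 2 0 l = (2 + 2*l) / (1 + l^0)"
  by (simp add: Phi_def numeral_eq_Suc binomial_Suc_Suc algebra_simps)

lemma ineq_2_0: assumes "0 \<le> (l::real)" shows "(2 + 2*l)^4 \<le> (1 + 4*l + 6*l^2)^2 * (1 + l^0)^4"
proof -
  have e: "(1 + 4*l + 6*l^2)^2 * (1 + l^0)^4 - (2 + 2*l)^4 = (64*l + 352*l^2 + 704*l^3 + 560*l^4)" by (simp add: algebra_simps eval_nat_numeral)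
  have "(64*l + 352*l^2 + 704*l^3 + 560*l^4) \<ge> (0::real)" using assms by ((intro add_nonneg_nonneg mult_nonneg_nonneg zero_le_power)?; simp)
  with e show ?thesis by linarith
qed

lemma phi_2_1: "Phi 2 1 l = (1 + 3*l) / (1 + l^1)"
  by (simp add: Phi_def numeral_eq_Suc binomial_Suc_Suc algebra_simps)

lemma ineq_2_1: assumes "0 \<le> (l::real)" shows "(1 + 3*l)^4 \<le> (1 + 4*l + 6*l^2)^2 * (1 + l^1)^4"
proof -
  have e: "(1 + 4*l + 6*l^2)^2 * (1 + l^1)^4 - (1 + 3*l)^4 = (12*l^2 + 104*l^3 + 348*l^4 + 552*l^5 + 436*l^6 + 192*l^7 + 36*l^8)" by (simp add: algebra_simps eval_nat_numeral)
  have "(12*l^2 + 104*l^3 + 348*l^4 + 552*l^5 + 436*l^6 + 192*l^7 + 36*l^8) \<ge> (0::real)" using assms by ((intro add_nonneg_nonneg mult_nonneg_nonneg zero_le_power)?; simp)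
  with e show ?thesis by linarith
qed

lemma phi_2_2: "Phi 2 2 l = (1 + 2*l + l^2) / (1 + l^2)"
  by (simp add: Phi_def numeral_eq_Suc binomial_Suc_Suc algebra_simps)

lemma ineq_2_2: assumes "0 \<le> (l::real)" shows "(1 + 2*l + l^2)^4 \<le> (1 + 4*l + 6*l^2)^2 * (1 + l^2)^4"
proof -
  have e: "(1 + 4*l + 6*l^2)^2 * (1 + l^2)^4 - (1 + 2*l + l^2)^4 = (4*l^2 + 24*l^3 + 84*l^4 + 184*l^5 + 288*l^6 + 312*l^7 + 328*l^8 + 200*l^9 + 172*l^10 + 48*l^11 + 36*l^12)" by (simp add: algebra_simps eval_nat_numeral)
  have "(4*l^2 + 24*l^3 + 84*l^4 + 184*l^5 + 288*l^6 + 312*l^7 + 328*l^8 + 200*l^9 + 172*l^10 + 48*l^11 + 36*l^12) \<ge> (0::real)" using assms by ((intro add_nonneg_nonneg mult_nonneg_nonneg zero_le_power)?; simp)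
  with e show ?thesis by linarith
qed

lemma phi_3_0: "Phi 3 0 l = (2 + 6*l) / (1 + l^0)"
  by (simp add: Phi_def numeral_eq_Suc binomial_Suc_Suc algebra_simps)

lemma ineq_3_0: assumes "0 \<le> (l::real)" shows "(2 + 6*l)^4 \<le> (1 + 4*l + 6*l^2)^3 * (1 + l^0)^4"
proof -
  have e: "(1 + 4*l + 6*l^2)^3 * (1 + l^0)^4 - (2 + 6*l)^4 = (192*l^2 + 1600*l^3 + 5040*l^4 + 6912*l^5 + 3456*l^6)" by (simp add: algebra_simps eval_nat_numeral)
  have "(192*l^2 + 1600*l^3 + 5040*l^4 + 6912*l^5 + 3456*l^6) \<ge> (0::real)" using assms by ((intro add_nonneg_nonneg mult_nonneg_nonneg zero_le_power)?; simp)
  with e show ?thesis by linarith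
qed

lemma phi_3_1: "Phi 3 1 l = (1 + 4*l + 3*l^2) / (1 + l^1)"
  by (simp add: Phi_def numeral_eq_Suc binomial_Suc_Suc algebra_simps)

lemma ineq_3_1: assumes "0 \<le> (l::real)" shows "(1 + 4*l + 3*l^2)^4 \<le> (1 + 4*l + 6*l^2)^3 * (1 + l^1)^4"
proof -
  have e: "(1 + 4*l + 6*l^2)^3 * (1 + l^1)^4 - (1 + 4*l + 3*l^2)^4 = (12*l^2 + 148*l^3 + 787*l^4 + 2340*l^5 + 4246*l^6 + 4816*l^7 + 3339*l^8 + 1296*l^9 + 216*l^10)" by (simp add: algebra_simps eval_nat_numeral)
  have "(12*l^2 + 148*l^3 + 787*l^4 + 2340*l^5 + 4246*l^6 + 4816*l^7 + 3339*l^8 + 1296*l^9 + 216*l^10) \<ge> (0::real)" using assms by ((intro add_nonneg_nonneg mult_nonneg_nonneg zero_le_power)?; simp)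
  with e show ?thesis by linarith
qed

lemma phi_4_0: "Phi 4 0 l = (2 + 8*l + 6*l^2) / (1 + l^0)"
  by (simp add: Phi_def numeral_eq_Suc binomial_Suc_Suc algebra_simps)

lemma ineq_4_0: assumes "0 \<le> (l::real)" shows "(2 + 8*l + 6*l^2)^4 \<le> (1 + 4*l + 6*l^2)^4 * (1 + l^0)^4"
proof -
  have e: "(1 + 4*l + 6*l^2)^4 * (1 + l^0)^4 - (2 + 8*l + 6*l^2)^4 = (192*l^2 + 2304*l^3 + 11808*l^4 + 33024*l^5 + 53568*l^6 + 48384*l^7 + 19440*l^8)" by (simp add: algebra_simps eval_nat_numeral)
  have "(192*l^2 + 2304*l^3 + 11808*l^4 + 33024*l^5 + 53568*l^6 + 48384*l^7 + 19440*l^8) \<ge> (0::real)" using assms by ((intro add_nonneg_nonneg mult_nonneg_nonneg zero_le_power)?; simp)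
  with e show ?thesis by linarith
qed


theorem lemma12:
  fixes v D :: nat and lam :: real
  assumes "v + D \<le> 4" and "0 < lam" and "lam \<le> 1"
  shows "Phi v D lam \<le> (1 + 4 * lam + 6 * lam^2) powr (real v / 4)"
proof -
  have l0: "0 \<le> lam" using assms by simp
  have q1: "1 \<le> 1 + 4 * lam + 6 * lam^2" using l0 by simp
  have "v = 0 \<and> D = 0 \<or> v = 0 \<and> D = 1 \<or> v = 0 \<and> D = 2 \<or> v = 0 \<and> D = 3 \<or> v = 0 \<and> D = 4 \<or> v = 1 \<and> D = 0 \<or> v = 1 \<and> D = 1 \<or> v = 1 \<and> D = 2 \<or> v = 1 \<and> D = 3 \<or> v = 2 \<and> D = 0 \<or> v = 2 \<and> D = 1 \<or> v = 2 \<and> D = 2 \<or> v = 3 \<and> D = 0 \<or> v = 3 \<and> D = 1 \<or> v = 4 \<and> D = 0" using assms(1) by arith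
  then show ?thesis
  proof (elim disjE conjE)
    assume "v = 0" "D = 0"
    have "Phi 0 0 lam \<le> (1 + 4 * lam + 6 * lam^2) powr (real 0 / 4)"
      unfolding phi_0_0 by (rule key[OF _ _ q1 ineq_0_0[OF l0]]) (simp_all add: l0 add_pos_nonneg)
    then show ?thesis using \<open>v = 0\<close> \<open>D = 0\<close> by simp
  next
    assume "v = 0" "D = 1"
    have "Phi 0 1 lam \<le> (1 + 4 * lam + 6 * lam^2) powr (real 0 / 4)"
      unfolding phi_0_1 by (rule key[OF _ _ q1 ineq_0_1[OF l0]]) (simp_all add: l0 add_pos_nonneg)
    then show ?thesis using \<open>v = 0\<close> \<open>D = 1\<close> by simp
  next
    assume "v = 0" "D = 2"
    have "Phi 0 2 lam \<le> (1 + 4 * lam + 6 * lam^2) powr (real 0 / 4)"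
      unfolding phi_0_2 by (rule key[OF _ _ q1 ineq_0_2[OF l0]]) (simp_all add: l0 add_pos_nonneg)
    then show ?thesis using \<open>v = 0\<close> \<open>D = 2\<close> by simp
  next
    assume "v = 0" "D = 3"
    have "Phi 0 3 lam \<le> (1 + 4 * lam + 6 * lam^2) powr (real 0 / 4)"
      unfolding phi_0_3 by (rule key[OF _ _ q1 ineq_0_3[OF l0]]) (simp_all add: l0 add_pos_nonneg)
    then show ?thesis using \<open>v = 0\<close> \<open>D = 3\<close> by simp
  next
    assume "v = 0" "D = 4"
    have "Phi 0 4 lam \<le> (1 + 4 * lam + 6 * lam^2) powr (real 0 / 4)"
      unfolding phi_0_4 by (rule key[OF _ _ q1 ineq_0_4[OF l0]]) (simp_all add: l0 add_pos_nonneg)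
    then show ?thesis using \<open>v = 0\<close> \<open>D = 4\<close> by simp
  next
    assume "v = 1" "D = 0"
    have "Phi 1 0 lam \<le> (1 + 4 * lam + 6 * lam^2) powr (real 1 / 4)"
      unfolding phi_1_0 by (rule key[OF _ _ q1 ineq_1_0[OF l0]]) (simp_all add: l0 add_pos_nonneg)
    then show ?thesis using \<open>v = 1\<close> \<open>D = 0\<close> by simp
  next
    assume "v = 1" "D = 1"
    have "Phi 1 1 lam \<le> (1 + 4 * lam + 6 * lam^2) powr (real 1 / 4)"
      unfolding phi_1_1 by (rule key[OF _ _ q1 ineq_1_1[OF l0]]) (simp_all add: l0 add_pos_nonneg)
    then show ?thesis using \<open>v = 1\<close> \<open>D = 1\<close> by simp
  next
    assume "v = 1" "D = 2"
    have "Phi 1 2 lam \<le> (1 + 4 * lam + 6 * lam^2) powr (real 1 / 4)"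
      unfolding phi_1_2 by (rule key[OF _ _ q1 ineq_1_2[OF l0]]) (simp_all add: l0 add_pos_nonneg)
    then show ?thesis using \<open>v = 1\<close> \<open>D = 2\<close> by simp
  next
    assume "v = 1" "D = 3"
    have "Phi 1 3 lam \<le> (1 + 4 * lam + 6 * lam^2) powr (real 1 / 4)"
      unfolding phi_1_3 by (rule key[OF _ _ q1 ineq_1_3[OF l0]]) (simp_all add: l0 add_pos_nonneg)
    then show ?thesis using \<open>v = 1\<close> \<open>D = 3\<close> by simp
  next
    assume "v = 2" "D = 0"
    have "Phi 2 0 lam \<le> (1 + 4 * lam + 6 * lam^2) powr (real 2 / 4)"
      unfolding phi_2_0 by (rule key[OF _ _ q1 ineq_2_0[OF l0]]) (simp_all add: l0 add_pos_nonneg)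
    then show ?thesis using \<open>v = 2\<close> \<open>D = 0\<close> by simp
  next
    assume "v = 2" "D = 1"
    have "Phi 2 1 lam \<le> (1 + 4 * lam + 6 * lam^2) powr (real 2 / 4)"
      unfolding phi_2_1 by (rule key[OF _ _ q1 ineq_2_1[OF l0]]) (simp_all add: l0 add_pos_nonneg)
    then show ?thesis using \<open>v = 2\<close> \<open>D = 1\<close> by simp
  next
    assume "v = 2" "D = 2"
    have "Phi 2 2 lam \<le> (1 + 4 * lam + 6 * lam^2) powr (real 2 / 4)"
      unfolding phi_2_2 by (rule key[OF _ _ q1 ineq_2_2[OF l0]]) (simp_all add: l0 add_pos_nonneg)
    then show ?thesis using \<open>v = 2\<close> \<open>D = 2\<close> by simp
  next
    assume "v = 3" "D = 0"
    have "Phi 3 0 lam \<le> (1 + 4 * lam + 6 * lam^2) powr (real 3 / 4)"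
      unfolding phi_3_0 by (rule key[OF _ _ q1 ineq_3_0[OF l0]]) (simp_all add: l0 add_pos_nonneg)
    then show ?thesis using \<open>v = 3\<close> \<open>D = 0\<close> by simp
  next
    assume "v = 3" "D = 1"
    have "Phi 3 1 lam \<le> (1 + 4 * lam + 6 * lam^2) powr (real 3 / 4)"
      unfolding phi_3_1 by (rule key[OF _ _ q1 ineq_3_1[OF l0]]) (simp_all add: l0 add_pos_nonneg)
    then show ?thesis using \<open>v = 3\<close> \<open>D = 1\<close> by simp
  next
    assume "v = 4" "D = 0"
    have "Phi 4 0 lam \<le> (1 + 4 * lam + 6 * lam^2) powr (real 4 / 4)"
      unfolding phi_4_0 by (rule key[OF _ _ q1 ineq_4_0[OF l0]]) (simp_all add: l0 add_pos_nonneg)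
    then show ?thesis using \<open>v = 4\<close> \<open>D = 0\<close> by simp
  qed
qed

end
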